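(* Fix integers $2\le k\le n$, $M=\lceil n/k\rceil$, and let the shadow images $1,\ldots,n$ be split into $M$ groups, group $j$ consisting of images $(j-1)k+1,\ldots,\min(jk,n)$; write $|\mathcal{G}_M|=n-(M-1)k$ for the size of the last group. Let $\vec\lambda=(\lambda_1,\ldots,\lambda_M)$ be a valid partition of $t=\sum_i\lambda_i$, and write its multiset of components as $\{l_1^{d_1},\ldots,l_r^{d_r}\}$, where $l_1,\ldots,l_r$ are the distinct values among $\lambda_1,\ldots,\lambda_M$ and $d_g$ is the multiplicity of $l_g$. Let $\beta_{\vec\lambda}$ be the probability that a uniformly random $t$-element subset of the $n$ shadow images contains, from groups $1,\ldots,M$, numbers of images forming a rearrangement of $\vec\lambda$ (i.e., a vector $(\lambda_{\varphi(1)},\ldots,\lambda_{\varphi(M)})$ for some permutation $\varphi$). Then $$\beta_{\vec\lambda}=\frac{1}{\binom{n}{t}}\sum_{g=1}^{r}\left[\binom{|\mathcal{G}_M|}{l_g}\,\frac{\prod_{i=1}^{r}\binom{k}{l_i}^{d_i}}{\binom{k}{l_g}}\cdot\frac{(M-1)!}{d_1!\cdots d_{g-1}!\,(d_g-1)!\,d_{g+1}!\cdots d_r!}\right],$$ with the convention $\binom{a}{b}=0$ when $b>a$.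
   Context: A valid partition is a vector $\vec\lambda=(\lambda_1,\ldots,\lambda_M)$ of non-negative integers with $\max_j\lambda_j\le k$ and $\lambda_M\le n-(M-1)k$. *)

theory Defs
  imports Complex_Main "HOL-Combinatorics.Permutations"
begin

definition num_groups :: "nat \<Rightarrow> nat \<Rightarrow> nat" where
  "num_groups n k = nat \<lceil>real n / real k\<rceil>"

definition group :: "nat \<Rightarrow> nat \<Rightarrow> nat \<Rightarrow> nat set" where
  "group n k j = {(j - 1) * k + 1 .. min (j * k) n}"

(* Valid partition, given as a list lam = [lambda_1, ..., lambda_M] (lam ! (j-1) = lambda_j) *)
definition valid_partition :: "nat \<Rightarrow> nat \<Rightarrow> nat list \<Rightarrow> bool" where
  "valid_partition n k lam \<longleftrightarrow>
     (let M = num_groups n k in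
        length lam = M \<and> (\<forall>j\<in>{1..M}. lam ! (j - 1) \<le> k) \<and>
        lam ! (M - 1) \<le> n - (M - 1) * k)"

definition good_subsets :: "nat \<Rightarrow> nat \<Rightarrow> nat list \<Rightarrow> nat set set" where
  "good_subsets n k lam =
     {S. S \<subseteq> {1..n} \<and> card S = sum_list lam \<and>
         (\<exists>\<phi>. \<phi> permutes {1..num_groups n k} \<and>
              (\<forall>j\<in>{1..num_groups n k}. card (S \<inter> group n k j) = lam ! (\<phi> j - 1)))}"

definition beta :: "nat \<Rightarrow> nat \<Rightarrow> nat list \<Rightarrow> real" where
  "beta n k lam = real (card (good_subsets n k lam)) / real (n choose sum_list lam)"

end

theory Submission imports Defs "HOL-Combinatorics.Multiset_Permutations" "HOL-Library.FuncSet"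
begin

lemma card_prescribed:
  fixes G :: "nat \<Rightarrow> 'a set"
  assumes fin: "finite I" and finG: "\<And>i. i \<in> I \<Longrightarrow> finite (G i)"
    and disj: "disjoint_family_on G I"
  shows "card {S. S \<subseteq> (\<Union>i\<in>I. G i) \<and> (\<forall>i\<in>I. card (S \<inter> G i) = c i)}
         = (\<Prod>i\<in>I. card (G i) choose c i)"
proof -
  let ?L = "{S. S \<subseteq> (\<Union>i\<in>I. G i) \<and> (\<forall>i\<in>I. card (S \<inter> G i) = c i)}"
  let ?R = "PiE I (\<lambda>i. {B. B \<subseteq> G i \<and> card B = c i})"
  have key: "(\<Union>j\<in>I. f j) \<inter> G i = f i" if "f \<in> ?R" "i \<in> I" for f i
  proof -
    have "f j \<inter> G i = {}" if "j \<in> I" "j \<noteq> i" for j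
    proof -
      have "f j \<subseteq> G j" using \<open>f \<in> ?R\<close> \<open>j \<in> I\<close> by (auto simp: PiE_def Pi_def)
      moreover have "G j \<inter> G i = {}" using disj that \<open>i \<in> I\<close> unfolding disjoint_family_on_def by auto
      ultimately show ?thesis by blast
    qed
    moreover have "f i \<subseteq> G i" using that by (auto simp: PiE_def)
    ultimately show ?thesis using that by blast
  qed
  have "bij_betw (\<lambda>S. restrict (\<lambda>i. S \<inter> G i) I) ?L ?R"
  proof (rule bij_betw_byWitness[where f' = "\<lambda>f. \<Union>j\<in>I. f j"])
    show "\<forall>S\<in>?L. (\<Union>j\<in>I. restrict (\<lambda>i. S \<inter> G i) I j) = S" by auto
    show "\<forall>f\<in>?R. restrict (\<lambda>i. (\<Union>j\<in>I. f j) \<inter> G i) I = f"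
    proof
      fix f assume f: "f \<in> ?R"
      show "restrict (\<lambda>i. (\<Union>j\<in>I. f j) \<inter> G i) I = f"
      proof
        fix i show "restrict (\<lambda>i. (\<Union>j\<in>I. f j) \<inter> G i) I i = f i"
          using key[OF f] f by (cases "i \<in> I") (auto simp: PiE_def extensional_def)
      qed
    qed
    show "(\<lambda>S. restrict (\<lambda>i. S \<inter> G i) I) ` ?L \<subseteq> ?R" by auto
    show "(\<lambda>f. \<Union>j\<in>I. f j) ` ?R \<subseteq> ?L"
    proof
      fix S assume "S \<in> (\<lambda>f. \<Union>j\<in>I. f j) ` ?R"
      then obtain f where f: "f \<in> ?R" and S: "S = (\<Union>j\<in>I. f j)" by blast
      have "S \<subseteq> (\<Union>i\<in>I. G i)" using f S by (auto simp: PiE_def)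
      moreover have "\<forall>i\<in>I. card (S \<inter> G i) = c i" using key[OF f] f S by (auto simp: PiE_def)
      ultimately show "S \<in> ?L" by blast
    qed
  qed
  hence "card ?L = card ?R" by (rule bij_betw_same_card)
  also have "\<dots> = (\<Prod>i\<in>I. card {B. B \<subseteq> G i \<and> card B = c i})" by (rule card_PiE[OF fin])
  also have "\<dots> = (\<Prod>i\<in>I. card (G i) choose c i)"
    by (rule prod.cong) (auto simp: n_subsets finG)
  finally show ?thesis .
qed

lemma prod_mset_count_superset:
  "finite X \<Longrightarrow> set_mset A \<subseteq> X \<Longrightarrow>
   (\<Prod>l\<in>X. (f l :: 'b::comm_monoid_mult) ^ count A l) = prod_mset (image_mset f A)"
proof (induction A)
  case empty thus ?case by simp
next
  case (add a A)
  have "(\<Prod>l\<in>X. f l ^ count (add_mset a A) l)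
      = (\<Prod>l\<in>X. f l ^ count A l * (if l = a then f a else 1))"
    by (rule prod.cong) (auto simp: power_add mult.commute)
  also have "\<dots> = (\<Prod>l\<in>X. f l ^ count A l) * (\<Prod>l\<in>X. (if l = a then f a else 1))"
    by (rule prod.distrib)
  also have "(\<Prod>l\<in>X. (if l = a then f a else 1)) = f a"
    using add.prems by (simp add: prod.delta)
  finally show ?case using add by (simp add: mult.commute)
qed

lemma prod_list_map_count:
  "(\<Prod>x\<leftarrow>xs. f x) = (\<Prod>l\<in>set xs. (f l :: 'b::comm_monoid_mult) ^ count (mset xs) l)"
proof -
  have "(\<Prod>x\<leftarrow>xs. f x) = prod_mset (image_mset f (mset xs))"
    by (simp add: prod_mset_prod_list flip: mset_map)
  also have "\<dots> = (\<Prod>l\<in>set xs. f l ^ count (mset xs) l)"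
    by (rule prod_mset_count_superset[symmetric]) auto
  finally show ?thesis .
qed

lemma num_groups_bounds:
  assumes "0 < k"
  shows "n \<le> num_groups n k * k" "(num_groups n k - 1) * k < n \<or> n = 0"
proof -
  let ?c = "\<lceil>real n / real k\<rceil>"
  have a: "real n / real k \<le> of_int ?c" by simp
  have "(0::real) \<le> real n / real k" by simp
  hence "(0::real) \<le> of_int ?c" using a by linarith
  hence c0: "?c \<ge> 0" by simp
  have b: "of_int ?c < real n / real k + 1" by linarith
  have M: "real (num_groups n k) = of_int ?c" using c0 by (simp add: num_groups_def)
  have "real n = real n / real k * real k" using assms by simp
  also have "\<dots> \<le> of_int ?c * real k" using a by (rule mult_right_mono) simp
  finally have "real n \<le> of_int ?c * real k" .
  hence "real n \<le> real (num_groups n k) * real k" using M by simp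
  thus "n \<le> num_groups n k * k" by (metis of_nat_le_iff of_nat_mult)
  show "(num_groups n k - 1) * k < n \<or> n = 0"
  proof (cases "num_groups n k = 0")
    case True thus ?thesis by auto
  next
    case False
    from b have "real (num_groups n k) - 1 < real n / real k" using M by simp
    hence "(real (num_groups n k) - 1) * real k < real n" using assms by (simp add: field_simps)
    hence "real ((num_groups n k - 1) * k) < real n" using False by (simp add: of_nat_diff)
    hence "(num_groups n k - 1) * k < n" by (simp only: of_nat_less_iff)
    thus ?thesis ..
  qed
qed

lemma mult_pred_eq: "1 \<le> (j::nat) \<Longrightarrow> j * k = (j - 1) * k + k"
  by (cases j) auto

lemma group_facts:
  fixes n k :: nat
  assumes k0: "0 < k" and kn: "k \<le> n"
  defines "M \<equiv> num_groups n k"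
  shows "1 \<le> M" "n \<le> M * k" "(M - 1) * k < n"
    "disjoint_family_on (group n k) {1..M}"
    "(\<Union>j\<in>{1..M}. group n k j) = {1..n}"
    "\<And>j. 1 \<le> j \<Longrightarrow> j < M \<Longrightarrow> card (group n k j) = k"
    "card (group n k M) = n - (M - 1) * k"
proof -
  show nM: "n \<le> M * k" using num_groups_bounds(1)[OF k0] by (simp add: M_def)
  show Mn: "(M - 1) * k < n" using num_groups_bounds(2)[OF k0, of n] kn k0 by (auto simp: M_def)
  show M1: "1 \<le> M" using nM kn k0 by (cases M) auto
  have mem: "(x - 1) div k = j - 1" if "x \<in> group n k j" "1 \<le> j" for x j
  proof (rule div_nat_eqI)
    from that have "(j - 1) * k + 1 \<le> x" "x \<le> j * k" by (auto simp: group_def)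
    with mult_pred_eq[OF that(2), of k] show "k * (j - 1) \<le> x - 1" "x - 1 < k * Suc (j - 1)"
      by (auto simp: mult.commute)
  qed
  show "disjoint_family_on (group n k) {1..M}"
    unfolding disjoint_family_on_def
  proof (intro ballI impI)
    fix i j assume ij: "i \<in> {1..M}" "j \<in> {1..M}" "i \<noteq> j"
    show "group n k i \<inter> group n k j = {}"
    proof (rule ccontr)
      assume "group n k i \<inter> group n k j \<noteq> {}"
      then obtain x where "x \<in> group n k i" "x \<in> group n k j" by blast
      hence "i - 1 = j - 1" using mem ij by (metis atLeastAtMost_iff)
      thus False using ij by auto
    qed
  qed
  show "(\<Union>j\<in>{1..M}. group n k j) = {1..n}"
  proof
    show "(\<Union>j\<in>{1..M}. group n k j) \<subseteq> {1..n}" by (auto simp: group_def)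
    show "{1..n} \<subseteq> (\<Union>j\<in>{1..M}. group n k j)"
    proof
      fix x assume x: "x \<in> {1..n}"
      define q where "q = (x - 1) div k"
      define r where "r = (x - 1) mod k"
      have qr: "q * k + r = x - 1" unfolding q_def r_def by simp
      have rk: "r < k" unfolding r_def using k0 by simp
      have "q < M" unfolding q_def using x nM by (intro less_mult_imp_div_less) auto
      moreover have "x \<in> group n k (q + 1)"
        using qr rk x by (auto simp: group_def algebra_simps)
      ultimately show "x \<in> (\<Union>j\<in>{1..M}. group n k j)" by (intro UN_I[of "q+1"]) auto
    qed
  qed
  show "card (group n k j) = k" if "1 \<le> j" "j < M" for j
  proof -
    have "j * k \<le> (M - 1) * k" using that by (intro mult_right_mono) auto
    hence "j * k < n" using Mn by linarith
    hence "min (j * k) n = j * k" by simp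
    thus ?thesis using mult_pred_eq[OF that(1), of k] by (simp add: group_def)
  qed
  show "card (group n k M) = n - (M - 1) * k"
  proof -
    have "min (M * k) n = n" using nM by simp
    thus ?thesis by (simp add: group_def)
  qed
qed

lemma "prod_list xs = (\<Prod>i = 0..<length xs. xs ! i)" by (rule prod.list_conv_set_nth)

lemma good_eq:
  fixes n k :: nat and lam :: "nat list"
  assumes k0: "0 < k" and kn: "k \<le> n" and len: "length lam = num_groups n k"
  shows "good_subsets n k lam = (\<Union>xs\<in>permutations_of_multiset (mset lam).
     {S. S \<subseteq> {1..n} \<and> (\<forall>j\<in>{1..num_groups n k}. card (S \<inter> group n k j) = xs ! (j - 1))})"
proof -
  define M where "M = num_groups n k"
  note gf = group_facts[OF k0 kn, folded M_def]
  have cardS: "card S = sum_list xs"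
    if S: "S \<subseteq> {1..n}" and lx: "length xs = M"
      and c: "\<forall>j\<in>{1..M}. card (S \<inter> group n k j) = xs ! (j - 1)" for S xs
  proof -
    have "S = (\<Union>j\<in>{1..M}. S \<inter> group n k j)" using S gf(5) by blast
    moreover have "card (\<Union>j\<in>{1..M}. S \<inter> group n k j) = (\<Sum>j\<in>{1..M}. card (S \<inter> group n k j))"
    proof (rule card_UN_disjoint)
      show "\<forall>i\<in>{1..M}. \<forall>j\<in>{1..M}. i \<noteq> j \<longrightarrow> (S \<inter> group n k i) \<inter> (S \<inter> group n k j) = {}"
        using gf(4) unfolding disjoint_family_on_def by blast
    qed (auto simp: group_def)
    ultimately have "card S = (\<Sum>j\<in>{1..M}. card (S \<inter> group n k j))" by simp
    also have "\<dots> = (\<Sum>j\<in>{1..M}. xs ! (j - 1))" using c by simp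
    also have "\<dots> = (\<Sum>i<M. xs ! i)" by (simp add: sum.atLeast1_atMost_eq)
    also have "\<dots> = sum_list xs" using lx by (simp add: sum_list_sum_nth atLeast0LessThan)
    finally show ?thesis .
  qed
  show ?thesis unfolding M_def[symmetric]
  proof
    show "good_subsets n k lam \<subseteq> (\<Union>xs\<in>permutations_of_multiset (mset lam).
     {S. S \<subseteq> {1..n} \<and> (\<forall>j\<in>{1..M}. card (S \<inter> group n k j) = xs ! (j - 1))})"
    proof
      fix S assume "S \<in> good_subsets n k lam"
      then obtain \<phi> where S: "S \<subseteq> {1..n}" and phi: "\<phi> permutes {1..M}"
        and c: "\<forall>j\<in>{1..M}. card (S \<inter> group n k j) = lam ! (\<phi> j - 1)"
        by (auto simp: good_subsets_def M_def)
      define p where "p = (\<lambda>i. if i < M then \<phi> (Suc i) - 1 else i)"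
      have pin: "p i < M" if "i < M" for i
        using permutes_in_image[OF phi, of "Suc i"] that by (auto simp: p_def)
      have pinj: "inj_on p {..<M}"
      proof
        fix i j assume ij: "i \<in> {..<M}" "j \<in> {..<M}" "p i = p j"
        have "\<phi> (Suc i) \<in> {1..M}" "\<phi> (Suc j) \<in> {1..M}"
          using permutes_in_image[OF phi] ij by auto
        hence "\<phi> (Suc i) = \<phi> (Suc j)" using ij by (auto simp: p_def)
        thus "i = j" using permutes_inj[OF phi] by (auto dest: injD)
      qed
      have "p ` {..<M} = {..<M}" by (rule endo_inj_surj) (use pin pinj in auto)
      hence "bij_betw p {..<M} {..<M}" using pinj by (simp add: bij_betw_def)
      hence pperm: "p permutes {..<length lam}"
        using len by (intro bij_imp_permutes) (auto simp: p_def M_def)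
      define xs where "xs = permute_list p lam"
      have "xs \<in> permutations_of_multiset (mset lam)"
        unfolding xs_def using pperm by (intro permutations_of_multisetI) simp
      moreover have "\<forall>j\<in>{1..M}. card (S \<inter> group n k j) = xs ! (j - 1)"
      proof
        fix j assume j: "j \<in> {1..M}"
        have "xs ! (j - 1) = lam ! p (j - 1)"
          unfolding xs_def using j len by (intro permute_list_nth[OF pperm]) (auto simp: M_def)
        also have "p (j - 1) = \<phi> j - 1" using j by (auto simp: p_def)
        finally show "card (S \<inter> group n k j) = xs ! (j - 1)" using c j by simp
      qed
      ultimately show "S \<in> (\<Union>xs\<in>permutations_of_multiset (mset lam).
        {S. S \<subseteq> {1..n} \<and> (\<forall>j\<in>{1..M}. card (S \<inter> group n k j) = xs ! (j - 1))})"
        using S by blast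
    qed
  next
    show "(\<Union>xs\<in>permutations_of_multiset (mset lam).
     {S. S \<subseteq> {1..n} \<and> (\<forall>j\<in>{1..M}. card (S \<inter> group n k j) = xs ! (j - 1))}) \<subseteq> good_subsets n k lam"
    proof
      fix S assume "S \<in> (\<Union>xs\<in>permutations_of_multiset (mset lam).
        {S. S \<subseteq> {1..n} \<and> (\<forall>j\<in>{1..M}. card (S \<inter> group n k j) = xs ! (j - 1))})"
      then obtain xs where xs: "mset xs = mset lam" and S: "S \<subseteq> {1..n}"
        and c: "\<forall>j\<in>{1..M}. card (S \<inter> group n k j) = xs ! (j - 1)"
        by (auto dest: permutations_of_multisetD)
      have lx: "length xs = M" using mset_eq_length[OF xs] len by (simp add: M_def)
      obtain p where pperm: "p permutes {..<length lam}" and pl: "permute_list p lam = xs"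
        using mset_eq_permutation[OF xs] by blast
      define \<phi> where "\<phi> = (\<lambda>j. if j \<in> {1..M} then Suc (p (j - 1)) else j)"
      have pin: "\<phi> j \<in> {1..M}" if "j \<in> {1..M}" for j
        using permutes_in_image[OF pperm, of "j - 1"] that len by (auto simp: \<phi>_def M_def)
      have pinj: "inj_on \<phi> {1..M}"
      proof
        fix i j assume ij: "i \<in> {1..M}" "j \<in> {1..M}" "\<phi> i = \<phi> j"
        hence "p (i - 1) = p (j - 1)" by (auto simp: \<phi>_def)
        hence "i - 1 = j - 1" using permutes_inj[OF pperm] by (auto dest: injD)
        thus "i = j" using ij by auto
      qed
      have "\<phi> ` {1..M} = {1..M}" by (rule endo_inj_surj) (use pin pinj in auto)
      hence "bij_betw \<phi> {1..M} {1..M}" using pinj by (simp add: bij_betw_def)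
      hence phi: "\<phi> permutes {1..M}"
        by (intro bij_imp_permutes) (auto simp: \<phi>_def)
      have c2: "\<forall>j\<in>{1..M}. card (S \<inter> group n k j) = lam ! (\<phi> j - 1)"
      proof
        fix j assume j: "j \<in> {1..M}"
        have "xs ! (j - 1) = lam ! p (j - 1)"
          unfolding pl[symmetric] using j len by (intro permute_list_nth[OF pperm]) (auto simp: M_def)
        thus "card (S \<inter> group n k j) = lam ! (\<phi> j - 1)" using c j by (simp add: \<phi>_def)
      qed
      have "card S = sum_list lam"
        using cardS[OF S lx c] xs by (metis sum_mset_sum_list)
      thus "S \<in> good_subsets n k lam"
        using S phi c2 by (auto simp: good_subsets_def M_def)
    qed
  qed
qed

lemma perm_card_real:
  assumes x: "x \<in> set lam"
  shows "real (card (permutations_of_multiset (mset lam - {#x#}))) =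
    fact (length lam - 1) /
      (\<Prod>li\<in>set lam. fact (if li = x then count (mset lam) li - 1 else count (mset lam) li))"
proof -
  let ?B = "mset lam - {#x#}"
  have aux: "card (permutations_of_multiset ?B) * (\<Prod>y\<in>set_mset ?B. fact (count ?B y)) = fact (size ?B)"
    by (rule card_permutations_of_multiset_aux)
  have sz: "size ?B = length lam - 1" using x by (simp add: size_Diff_submset)
  have pr: "(\<Prod>y\<in>set_mset ?B. fact (count ?B y) :: nat) =
     (\<Prod>li\<in>set lam. fact (if li = x then count (mset lam) li - 1 else count (mset lam) li))"
  proof -
    have "(\<Prod>y\<in>set_mset ?B. fact (count ?B y) :: nat) = (\<Prod>y\<in>set lam. fact (count ?B y))"
    proof (rule prod.mono_neutral_left)
      show "set_mset ?B \<subseteq> set lam" by (auto dest: in_diffD)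
      show "\<forall>i\<in>set lam - set_mset ?B. fact (count ?B i) = (1::nat)"
      proof
        fix i assume "i \<in> set lam - set_mset ?B"
        hence "count ?B i = 0" by (simp only: Diff_iff not_in_iff)
        thus "fact (count ?B i) = (1::nat)" by simp
      qed
    qed auto
    also have "\<dots> = (\<Prod>li\<in>set lam. fact (if li = x then count (mset lam) li - 1 else count (mset lam) li))"
      by (rule prod.cong) auto
    finally show ?thesis .
  qed
  have pos: "(\<Prod>li\<in>set lam. fact (if li = x then count (mset lam) li - 1 else count (mset lam) li) :: nat) > 0"
    by (intro prod_pos) auto
  from aux have "real (card (permutations_of_multiset ?B)) *
      real (\<Prod>li\<in>set lam. fact (if li = x then count (mset lam) li - 1 else count (mset lam) li) :: nat)
      = real (fact (length lam - 1))" unfolding pr sz by (metis of_nat_mult)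
  hence "real (card (permutations_of_multiset ?B)) = real (fact (length lam - 1)) /
      real (\<Prod>li\<in>set lam. fact (if li = x then count (mset lam) li - 1 else count (mset lam) li) :: nat)"
    using pos by (simp add: field_simps)
  thus ?thesis by (simp add: of_nat_prod)
qed

lemma sum_last:
  fixes h :: "nat \<Rightarrow> real"
  assumes ne: "lam \<noteq> []"
  shows "(\<Sum>xs\<in>permutations_of_multiset (mset lam). h (last xs)) =
    (\<Sum>x\<in>set lam. real (card (permutations_of_multiset (mset lam - {#x#}))) * h x)"
proof -
  let ?P = "permutations_of_multiset (mset lam)"
  have Pd: "?P = (\<Union>x\<in>set_mset (mset lam). ((#) x) ` permutations_of_multiset (mset lam - {#x#}))"
    using ne by (intro permutations_of_multiset_nonempty) simp
  have "(\<Sum>xs\<in>?P. h (last xs)) = (\<Sum>xs\<in>rev ` ?P. h (last xs))" by simp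
  also have "\<dots> = (\<Sum>xs\<in>?P. h (last (rev xs)))"
    by (subst sum.reindex) (auto simp: inj_on_def)
  also have "\<dots> = (\<Sum>xs\<in>?P. h (hd xs))" by (simp add: last_rev)
  also have "\<dots> =
     (\<Sum>x\<in>set_mset (mset lam). \<Sum>xs\<in>((#) x) ` permutations_of_multiset (mset lam - {#x#}). h (hd xs))"
    unfolding Pd by (subst sum.UNION_disjoint) auto
  also have "\<dots> = (\<Sum>x\<in>set lam. real (card (permutations_of_multiset (mset lam - {#x#}))) * h x)"
    by (rule sum.cong) (auto simp: sum.reindex)
  finally show ?thesis .
qed

theorem lemma5:
  fixes n k :: nat and lam :: "nat list"
  assumes "2 \<le> k" and "k \<le> n"
    and "valid_partition n k lam"
  defines "M \<equiv> num_groups n k"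
    and "t \<equiv> sum_list lam"
    and "GM \<equiv> n - (num_groups n k - 1) * k"
    and "d \<equiv> (\<lambda>l. count (mset lam) l)"
  shows "beta n k lam =
    (1 / real (n choose t)) *
    (\<Sum>lg\<in>set lam.
       real (GM choose lg) *
       ((\<Prod>li\<in>set lam. real (k choose li) ^ d li) / real (k choose lg)) *
       (fact (M - 1) / (\<Prod>li\<in>set lam. fact (if li = lg then d li - 1 else d li))))"
proof -
  have k0: "0 < k" using assms(1) by simp
  note gf = group_facts[OF k0 assms(2), folded M_def]
  have len: "length lam = M" and lamk: "\<forall>j\<in>{1..M}. lam ! (j - 1) \<le> k"
    using assms(3) by (auto simp: valid_partition_def M_def Let_def)
  have setk: "x \<le> k" if "x \<in> set lam" for x
  proof -
    have "\<exists>i<length lam. lam ! i = x" using in_set_conv_nth[THEN iffD1, OF that] .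
    then obtain i where "i < length lam" "x = lam ! i" by auto
    moreover have "Suc i \<in> {1..M}" using \<open>i < length lam\<close> len by simp
    ultimately show ?thesis using lamk by fastforce
  qed
  have ne: "lam \<noteq> []" using len gf(1) by auto
  define P where "P = permutations_of_multiset (mset lam)"
  define A where "A xs = {S. S \<subseteq> {1..n} \<and> (\<forall>j\<in>{1..M}. card (S \<inter> group n k j) = xs ! (j - 1))}" for xs
  define Pi where "Pi = (\<Prod>li\<in>set lam. real (k choose li) ^ d li)"
  define h where "h l = real (GM choose l) * (Pi / real (k choose l))" for l
  have good: "good_subsets n k lam = (\<Union>xs\<in>P. A xs)"
    unfolding P_def A_def M_def using good_eq[OF k0 assms(2) len[unfolded M_def]] by simp
  have lenP: "length xs = M" if "xs \<in> P" for xs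
    using that len by (auto simp: P_def dest!: permutations_of_multisetD mset_eq_length)
  have cardgood: "card (good_subsets n k lam) = (\<Sum>xs\<in>P. card (A xs))"
    unfolding good
  proof (rule card_UN_disjoint)
    show "finite P" by (simp add: P_def)
    show "\<forall>xs\<in>P. finite (A xs)" by (auto simp: A_def intro: finite_subset[of _ "Pow {1..n}"])
    show "\<forall>xs\<in>P. \<forall>ys\<in>P. xs \<noteq> ys \<longrightarrow> A xs \<inter> A ys = {}"
    proof (intro ballI impI)
      fix xs ys assume xy: "xs \<in> P" "ys \<in> P" "xs \<noteq> ys"
      show "A xs \<inter> A ys = {}"
      proof (rule ccontr)
        assume "A xs \<inter> A ys \<noteq> {}"
        then obtain S where "S \<in> A xs" "S \<in> A ys" by blast
        hence eq: "xs ! (j - 1) = ys ! (j - 1)" if "j \<in> {1..M}" for j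
          using that by (auto simp: A_def)
        have "xs = ys"
        proof (rule nth_equalityI)
          show "length xs = length ys" using lenP xy by simp
          fix i assume "i < length xs"
          thus "xs ! i = ys ! i" using eq[of "Suc i"] lenP xy by auto
        qed
        thus False using xy by simp
      qed
    qed
  qed
  have cardA: "real (card (A xs)) = h (last xs)" if xs: "xs \<in> P" for xs
  proof -
    have lx: "length xs = M" using lenP xs .
    have mx: "mset xs = mset lam" using xs by (simp add: P_def permutations_of_multisetD)
    have sx: "set xs = set lam" using mx by (metis set_mset_mset)
    have "A xs = {S. S \<subseteq> (\<Union>j\<in>{1..M}. group n k j) \<and> (\<forall>j\<in>{1..M}. card (S \<inter> group n k j) = xs ! (j - 1))}"
      unfolding A_def gf(5) ..
    hence "card (A xs) = (\<Prod>j\<in>{1..M}. card (group n k j) choose xs ! (j - 1))"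
      using card_prescribed[of "{1..M}" "group n k" "\<lambda>j. xs ! (j - 1)"] gf(4)
      by (simp add: group_def)
    hence c1: "real (card (A xs)) = (\<Prod>j\<in>{1..M}. real (card (group n k j) choose xs ! (j - 1)))"
      by (simp add: of_nat_prod)
    have split: "{1..M} = insert M {1..M - 1}" using gf(1) by auto
    have c2: "(\<Prod>j\<in>{1..M}. real (card (group n k j) choose xs ! (j - 1)))
       = real (GM choose xs ! (M - 1)) * (\<Prod>j\<in>{1..M - 1}. real (k choose xs ! (j - 1)))"
    proof -
      have "(\<Prod>j\<in>{1..M}. real (card (group n k j) choose xs ! (j - 1)))
         = real (card (group n k M) choose xs ! (M - 1)) *
           (\<Prod>j\<in>{1..M - 1}. real (card (group n k j) choose xs ! (j - 1)))"
        unfolding split using gf(1) by (subst prod.insert) auto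
      also have "(\<Prod>j\<in>{1..M - 1}. real (card (group n k j) choose xs ! (j - 1)))
          = (\<Prod>j\<in>{1..M - 1}. real (k choose xs ! (j - 1)))"
        by (rule prod.cong) (use gf(6) in auto)
      finally show ?thesis using gf(7) by (simp add: GM_def M_def)
    qed
    have c3: "(\<Prod>j\<in>{1..M}. real (k choose xs ! (j - 1)))
       = real (k choose xs ! (M - 1)) * (\<Prod>j\<in>{1..M - 1}. real (k choose xs ! (j - 1)))"
      unfolding split using gf(1) by (subst prod.insert) auto
    have c4: "(\<Prod>j\<in>{1..M}. real (k choose xs ! (j - 1))) = Pi"
    proof -
      have "(\<Prod>j\<in>{1..M}. real (k choose xs ! (j - 1))) = (\<Prod>i<M. real (k choose xs ! i))"
        using gf(1) by (simp add: prod.atLeast1_atMost_eq)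
      also have "\<dots> = (\<Prod>x\<leftarrow>xs. real (k choose x))"
        using prod.list_conv_set_nth[of "map (\<lambda>x. real (k choose x)) xs"] lx
        by (simp add: atLeast0LessThan)
      also have "\<dots> = (\<Prod>l\<in>set xs. real (k choose l) ^ count (mset xs) l)"
        by (rule prod_list_map_count)
      also have "\<dots> = Pi" unfolding Pi_def d_def mx[symmetric] sx by simp
      finally show ?thesis .
    qed
    have lastx: "last xs = xs ! (M - 1)" using lx gf(1) by (subst last_conv_nth) auto
    have "M - 1 < length xs" using lx gf(1) by simp
    hence "xs ! (M - 1) \<in> set xs" by (rule nth_mem)
    moreover note sx
    ultimately have "xs ! (M - 1) \<in> set lam" by simp
    hence pos: "real (k choose xs ! (M - 1)) > 0" using setk by simp
    show ?thesis
      unfolding c1 c2 h_def lastx using c3 c4 pos by (simp add: field_simps)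
  qed
  have "real (card (good_subsets n k lam)) = (\<Sum>xs\<in>P. h (last xs))"
    unfolding cardgood of_nat_sum using cardA by simp
  also have "\<dots> = (\<Sum>x\<in>set lam. real (card (permutations_of_multiset (mset lam - {#x#}))) * h x)"
    unfolding P_def by (rule sum_last[OF ne])
  also have "\<dots> = (\<Sum>lg\<in>set lam.
       real (GM choose lg) *
       ((\<Prod>li\<in>set lam. real (k choose li) ^ d li) / real (k choose lg)) *
       (fact (M - 1) / (\<Prod>li\<in>set lam. fact (if li = lg then d li - 1 else d li))))"
  proof (rule sum.cong[OF refl])
    fix x assume x: "x \<in> set lam"
    show "real (card (permutations_of_multiset (mset lam - {#x#}))) * h x =
       real (GM choose x) *
       ((\<Prod>li\<in>set lam. real (k choose li) ^ d li) / real (k choose x)) *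
       (fact (M - 1) / (\<Prod>li\<in>set lam. fact (if li = x then d li - 1 else d li)))"
      unfolding perm_card_real[OF x] h_def Pi_def d_def len by (simp add: mult_ac)
  qed
  finally show ?thesis unfolding beta_def t_def by simp
qed

end
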